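(* Let $\mathcal D$ be a distribution of $(x,y)\in\mathbb R^d\times\{-1,+1\}$ with $x$ having finite second moments, let $\lambda>0$, and let $w^*=(w_1^*,\dots,w_d^* )$ be a minimizer of $\mathcal L(w)=\mathbb E_{(x,y)\sim\mathcal D}[\max(0,1-yw^\top x)]+\frac{\lambda}{2}\|w\|_2^2$. Suppose that the coordinates of $x$ are mutually independent conditionally on $y$. If a coordinate $i$ satisfies $\mathbb E[x_i\mid y=-1]\le 0\le \mathbb E[x_i\mid y=1]$, then $w_i^*\ge 0$. If instead $\mathbb E[x_i\mid y=1]\le 0\le \mathbb E[x_i\mid y=-1]$, then $w_i^*\le 0$. *)

theory Defs
  imports "HOL-Probability.Probability"
begin

text \<open>The data distribution D is the joint law of a random pair (X, Y) on a
probability space M, with X valued in R^d (here real^'d) and Y in {-1,+1}.\<close>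

definition cond_event :: "'w measure \<Rightarrow> ('w \<Rightarrow> real) \<Rightarrow> real \<Rightarrow> 'w set" where
  "cond_event M Y c = {\<omega> \<in> space M. Y \<omega> = c}"

definition cond_exp_given :: "'w measure \<Rightarrow> ('w \<Rightarrow> real) \<Rightarrow> real \<Rightarrow> ('w \<Rightarrow> real) \<Rightarrow> real" where
  "cond_exp_given M Y c f = integral\<^sup>L (uniform_measure M (cond_event M Y c)) f"

definition hinge_objective ::
  "'w measure \<Rightarrow> ('w \<Rightarrow> real^'d) \<Rightarrow> ('w \<Rightarrow> real) \<Rightarrow> real \<Rightarrow> real^'d \<Rightarrow> real" where
  "hinge_objective M X Y lam w =
     integral\<^sup>L M (\<lambda>\<omega>. max 0 (1 - Y \<omega> * (w \<bullet> X \<omega>))) + lam / 2 * (norm w)^2"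

end

theory Submission
  imports Defs
begin

lemma unif_int:
  fixes f :: "'a \<Rightarrow> real"
  assumes fm: "finite_measure M" and A: "A \<in> sets M" and pos: "measure M A > 0"
    and f[measurable]: "f \<in> borel_measurable M"
  shows "integrable (uniform_measure M A) f \<longleftrightarrow> integrable M (\<lambda>x. indicator A x * f x)"
    and "integral\<^sup>L (uniform_measure M A) f = integral\<^sup>L M (\<lambda>x. indicator A x * f x) / measure M A"
proof -
  note [measurable] = A
  have e: "emeasure M A = ennreal (measure M A)"
    using finite_measure.emeasure_eq_measure[OF fm] by simp
  have eq: "uniform_measure M A = density M (\<lambda>x. ennreal (indicator A x / measure M A))"
    unfolding uniform_measure_def e
  proof (rule arg_cong[where f="density M"], rule ext)
    fix x show "indicator A x / ennreal (measure M A) = ennreal (indicator A x / measure M A)"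
      using pos by (cases "x \<in> A") (auto simp: divide_ennreal[symmetric])
  qed
  have fq: "(\<lambda>x. (indicator A x / measure M A) *\<^sub>R f x) = (\<lambda>x. (1 / measure M A) * (indicator A x * f x))"
    by auto
  show "integrable (uniform_measure M A) f \<longleftrightarrow> integrable M (\<lambda>x. indicator A x * f x)"
    unfolding eq using pos
    apply (subst integrable_density)
       apply (auto simp only: fq integrable_mult_left_iff)
    by auto
  show "integral\<^sup>L (uniform_measure M A) f = integral\<^sup>L M (\<lambda>x. indicator A x * f x) / measure M A"
    unfolding eq using pos
    by (subst integral_density) (auto simp: fq)
qed

theorem mainTheorem1:
  fixes M :: "'w measure" and X :: "'w \<Rightarrow> real^'d" and Y :: "'w \<Rightarrow> real"
    and lam :: real and wstar :: "real^'d" and i :: 'd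
  assumes "prob_space M"
    and "X \<in> borel_measurable M" and "Y \<in> borel_measurable M"
    and "\<And>\<omega>. \<omega> \<in> space M \<Longrightarrow> Y \<omega> \<in> {-1, 1}"
    and "measure M (cond_event M Y 1) > 0" and "measure M (cond_event M Y (-1)) > 0"
    and "integrable M (\<lambda>\<omega>. (norm (X \<omega>))^2)"
    and "lam > 0"
    and "\<And>w. hinge_objective M X Y lam wstar \<le> hinge_objective M X Y lam w"
    and "\<And>c. c \<in> {-1, 1} \<Longrightarrow>
           prob_space.indep_vars (uniform_measure M (cond_event M Y c))
             (\<lambda>j. borel) (\<lambda>j \<omega>. X \<omega> $ j) UNIV"
  shows "(cond_exp_given M Y (-1) (\<lambda>\<omega>. X \<omega> $ i) \<le> 0 \<and>
          0 \<le> cond_exp_given M Y 1 (\<lambda>\<omega>. X \<omega> $ i) \<longrightarrow> wstar $ i \<ge> 0)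
       \<and> (cond_exp_given M Y 1 (\<lambda>\<omega>. X \<omega> $ i) \<le> 0 \<and>
          0 \<le> cond_exp_given M Y (-1) (\<lambda>\<omega>. X \<omega> $ i) \<longrightarrow> wstar $ i \<le> 0)"
proof -
  interpret P: prob_space M by fact
  note [measurable] = assms(2,3)
  have Ysp: "\<And>\<omega>. \<omega> \<in> space M \<Longrightarrow> Y \<omega> = 1 \<or> Y \<omega> = -1" using assms(4) by auto
  define A where "A c = cond_event M Y c" for c
  have Asets[measurable]: "A c \<in> sets M" for c
    unfolding A_def cond_event_def by measurable
  define mu where "mu c = measure M (A c)" for c
  define E where "E c f = cond_exp_given M Y c f" for c f
  have mupos: "mu c > 0" if "c \<in> {-1,1}" for c
    using that assms(5,6) unfolding mu_def A_def by auto
  have Xi[measurable]: "(\<lambda>\<omega>. X \<omega> $ j) \<in> borel_measurable M" for j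
    by (rule measurable_compose[OF assms(2) borel_measurable_nth])
  have nX: "integrable M (\<lambda>\<omega>. norm (X \<omega>))"
    by (rule P.square_integrable_imp_integrable) (use assms(7) in auto)
  have Xi_int: "integrable M (\<lambda>\<omega>. X \<omega> $ j)" for j
    by (rule Bochner_Integration.integrable_bound[OF nX]) (auto simp: component_le_norm_cart)
  have key: "integral\<^sup>L M (\<lambda>\<omega>. indicator (A c) \<omega> * f \<omega>) = mu c * E c f"
    and keyi: "integrable (uniform_measure M (A c)) f"
    if c: "c \<in> {-1,1}" and f[measurable]: "f \<in> borel_measurable M"
      and fi: "integrable M (\<lambda>\<omega>. indicator (A c) \<omega> * f \<omega>)" for c f
  proof -
    have fm: "finite_measure M" by unfold_locales
    show "integral\<^sup>L M (\<lambda>\<omega>. indicator (A c) \<omega> * f \<omega>) = mu c * E c f"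
      using unif_int(2)[OF fm Asets mupos[OF c, unfolded mu_def] f] mupos[OF c]
      unfolding E_def cond_exp_given_def A_def mu_def by auto
    show "integrable (uniform_measure M (A c)) f"
      using unif_int(1)[OF fm Asets mupos[OF c, unfolded mu_def] f] fi by auto
  qed
  have Edef: "E c f = integral\<^sup>L (uniform_measure M (A c)) f" for c f
    by (simp add: E_def A_def cond_exp_given_def)
  define d where "d = wstar $ i"
  define w' where "w' = (\<chi> j. if j = i then 0 else wstar $ j)"
  have wdec: "wstar = w' + d *\<^sub>R axis i 1"
    by (simp add: vec_eq_iff w'_def d_def axis_def)
  have w'i: "w' $ i = 0" by (simp add: w'_def)
  have dot: "wstar \<bullet> x = w' \<bullet> x + d * x $ i" for x :: "real^'d"
    by (simp add: wdec inner_add_left inner_axis')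
  have nrm: "(norm wstar)^2 = (norm w')^2 + d^2"
    unfolding power2_norm_eq_inner wdec
    by (simp add: inner_add_left inner_add_right inner_axis inner_axis' w'i inner_axis_axis
        algebra_simps power2_eq_square)
  define h where "h w \<omega> = max 0 (1 - Y \<omega> * (w \<bullet> X \<omega>))" for w \<omega>
  have hm[measurable]: "h w \<in> borel_measurable M" for w
    unfolding h_def by measurable
  have hint: "integrable M (h w)" for w
  proof (rule Bochner_Integration.integrable_bound)
    show "integrable M (\<lambda>\<omega>. 1 + norm w * norm (X \<omega>))"
      using nX by auto
    show "AE \<omega> in M. norm (h w \<omega>) \<le> norm (1 + norm w * norm (X \<omega>))"
    proof (rule AE_I2)
      fix \<omega> assume "\<omega> \<in> space M"
      have "\<bar>w \<bullet> X \<omega>\<bar> \<le> norm w * norm (X \<omega>)" by (rule Cauchy_Schwarz_ineq2)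
      moreover have "\<bar>Y \<omega> * (w \<bullet> X \<omega>)\<bar> = \<bar>w \<bullet> X \<omega>\<bar>"
        using Ysp[OF \<open>\<omega> \<in> space M\<close>] by auto
      moreover have "0 \<le> norm w * norm (X \<omega>)" by simp
      ultimately show "norm (h w \<omega>) \<le> norm (1 + norm w * norm (X \<omega>))"
        unfolding h_def by (auto simp: abs_le_iff)
    qed
  qed simp
  define g where "g c \<omega> = (if 1 - c * (w' \<bullet> X \<omega>) > 0 then 1 else 0::real)" for c \<omega>
  have gm[measurable]: "g c \<in> borel_measurable M" for c
    unfolding g_def by measurable
  define G where "G \<omega> = g (Y \<omega>) \<omega> * Y \<omega> * X \<omega> $ i" for \<omega>
  have Gm[measurable]: "G \<in> borel_measurable M"
    unfolding G_def g_def by measurable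
  have Gint: "integrable M G"
  proof (rule Bochner_Integration.integrable_bound[OF Xi_int[of i] Gm])
    show "AE \<omega> in M. norm (G \<omega>) \<le> norm (X \<omega> $ i)"
    proof (rule AE_I2)
      fix \<omega> assume "\<omega> \<in> space M"
      then show "norm (G \<omega>) \<le> norm (X \<omega> $ i)"
        using Ysp[OF \<open>\<omega> \<in> space M\<close>] unfolding G_def g_def by (auto simp: abs_mult)
    qed
  qed
  have pw: "h w' \<omega> - d * G \<omega> \<le> h wstar \<omega>" if "\<omega> \<in> space M" for \<omega>
    using Ysp[OF that] unfolding h_def G_def g_def dot by (auto simp: algebra_simps)
  have Hineq: "integral\<^sup>L M (h w') - d * integral\<^sup>L M G \<le> integral\<^sup>L M (h wstar)"
  proof -
    have "integral\<^sup>L M (\<lambda>\<omega>. h w' \<omega> - d * G \<omega>) \<le> integral\<^sup>L M (h wstar)"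
      by (rule integral_mono) (use hint Gint pw in auto)
    also have "integral\<^sup>L M (\<lambda>\<omega>. h w' \<omega> - d * G \<omega>) = integral\<^sup>L M (h w') - d * integral\<^sup>L M G"
      using hint Gint by simp
    finally show ?thesis .
  qed
  have boundi: "integrable M (\<lambda>\<omega>. indicator (A c) \<omega> * (g c' \<omega> * X \<omega> $ i))" for c c'
  proof (rule Bochner_Integration.integrable_bound[OF Xi_int[of i]])
    show "AE \<omega> in M. norm (indicator (A c) \<omega> * (g c' \<omega> * X \<omega> $ i)) \<le> norm (X \<omega> $ i)"
      by (rule AE_I2) (auto simp: g_def indicator_def abs_mult)
  qed measurable
  have boundX: "integrable M (\<lambda>\<omega>. indicator (A c) \<omega> * X \<omega> $ i)" for c
  proof (rule Bochner_Integration.integrable_bound[OF Xi_int[of i]])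
    show "AE \<omega> in M. norm (indicator (A c) \<omega> * X \<omega> $ i) \<le> norm (X \<omega> $ i)"
      by (rule AE_I2) (auto simp: indicator_def)
  qed measurable
  have boundg: "integrable M (\<lambda>\<omega>. indicator (A c) \<omega> * g c' \<omega>)" for c c'
  proof (rule Bochner_Integration.integrable_bound[of _ "\<lambda>_. 1::real"])
    show "AE \<omega> in M. norm (indicator (A c) \<omega> * g c' \<omega>) \<le> norm (1::real)"
      by (rule AE_I2) (auto simp: g_def indicator_def)
  qed auto
  have Gsplit: "G \<omega> = indicator (A 1) \<omega> * (g 1 \<omega> * X \<omega> $ i)
      - indicator (A (-1)) \<omega> * (g (-1) \<omega> * X \<omega> $ i)" if "\<omega> \<in> space M" for \<omega>
    using Ysp[OF that] that unfolding G_def A_def cond_event_def by (auto simp: indicator_def)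
  have Tform: "integral\<^sup>L M G = mu 1 * E 1 (\<lambda>\<omega>. g 1 \<omega> * X \<omega> $ i)
      - mu (-1) * E (-1) (\<lambda>\<omega>. g (-1) \<omega> * X \<omega> $ i)"
  proof -
    have "integral\<^sup>L M G = integral\<^sup>L M (\<lambda>\<omega>. indicator (A 1) \<omega> * (g 1 \<omega> * X \<omega> $ i)
      - indicator (A (-1)) \<omega> * (g (-1) \<omega> * X \<omega> $ i))"
      by (rule Bochner_Integration.integral_cong) (auto simp: Gsplit)
    also have "\<dots> = integral\<^sup>L M (\<lambda>\<omega>. indicator (A 1) \<omega> * (g 1 \<omega> * X \<omega> $ i))
      - integral\<^sup>L M (\<lambda>\<omega>. indicator (A (-1)) \<omega> * (g (-1) \<omega> * X \<omega> $ i))"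
      by (rule Bochner_Integration.integral_diff) (rule boundi)+
    also have "\<dots> = mu 1 * E 1 (\<lambda>\<omega>. g 1 \<omega> * X \<omega> $ i)
      - mu (-1) * E (-1) (\<lambda>\<omega>. g (-1) \<omega> * X \<omega> $ i)"
      by (subst key, simp, measurable, rule boundi)+ (rule refl)
    finally show ?thesis .
  qed
  have indep: "E c (\<lambda>\<omega>. g c \<omega> * X \<omega> $ i) = E c (g c) * E c (\<lambda>\<omega>. X \<omega> $ i)
     \<and> E c (g c) \<ge> 0" if c: "c \<in> {-1,1}" for c
  proof -
    define N where "N = uniform_measure M (A c)"
    have "emeasure M (A c) = ennreal (mu c)" unfolding mu_def by (simp add: P.emeasure_eq_measure)
    then have "prob_space N" unfolding N_def using mupos[OF c]
      by (intro prob_space_uniform_measure) auto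
    then interpret N: prob_space N .
    have ind: "N.indep_vars (\<lambda>j. borel) (\<lambda>j \<omega>. X \<omega> $ j) UNIV"
      using assms(10)[OF c] unfolding N_def A_def .
    have ind2: "N.indep_vars (\<lambda>j. borel) (\<lambda>j \<omega>. (\<lambda>x. if j = i then x else w' $ j * x) (X \<omega> $ j)) UNIV"
      by (rule N.indep_vars_compose2[OF ind]) auto
    have ind3: "N.indep_vars (\<lambda>j. borel) (\<lambda>j \<omega>. if j = i then X \<omega> $ j else w' $ j * X \<omega> $ j) (insert i (UNIV - {i}))"
      using ind2 by (simp add: insert_absorb)
    have ind4: "N.indep_var borel (\<lambda>\<omega>. X \<omega> $ i) borel
        (\<lambda>\<omega>. \<Sum>j\<in>UNIV-{i}. if j = i then X \<omega> $ j else w' $ j * X \<omega> $ j)"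
      using N.indep_vars_sum[OF _ _ ind3] by simp
    have sumeq: "(\<Sum>j\<in>UNIV-{i}. w' $ j * X \<omega> $ j) = w' \<bullet> X \<omega>" for \<omega>
      unfolding inner_vec_def inner_real_def
      using sum.remove[of UNIV i "\<lambda>j. w' $ j * X \<omega> $ j"] by (simp add: w'i)
    have ind5: "N.indep_var borel (\<lambda>\<omega>. X \<omega> $ i) borel (\<lambda>\<omega>. w' \<bullet> X \<omega>)"
      using ind4 by (simp add: sumeq)
    have meas: "(\<lambda>s::real. if 1 - c * s > 0 then 1 else (0::real)) \<in> borel_measurable borel"
      by measurable
    have ind6: "N.indep_var borel (\<lambda>\<omega>. X \<omega> $ i) borel (g c)"
      using N.indep_var_compose[OF ind5, of "\<lambda>x. x" borel _ borel, OF _ meas]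
      unfolding comp_def g_def by simp
    have iX: "integrable N (\<lambda>\<omega>. X \<omega> $ i)" unfolding N_def
      by (rule keyi[OF c]) (measurable, rule boundX)
    have ig: "integrable N (g c)" unfolding N_def
      by (rule keyi[OF c]) (measurable, rule boundg)
    have "integral\<^sup>L N (\<lambda>\<omega>. X \<omega> $ i * g c \<omega>) = integral\<^sup>L N (\<lambda>\<omega>. X \<omega> $ i) * integral\<^sup>L N (g c)"
      by (rule N.indep_var_lebesgue_integral[OF ind6 iX ig])
    moreover have "integral\<^sup>L N (g c) \<ge> 0"
      by (rule Bochner_Integration.integral_nonneg) (simp add: g_def)
    ultimately show ?thesis unfolding Edef N_def[symmetric] by (simp add: mult.commute)
  qed
  have obj: "hinge_objective M X Y lam w = integral\<^sup>L M (h w) + lam/2 * (norm w)^2" for w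
    by (simp add: hinge_objective_def h_def[abs_def])
  have min: "integral\<^sup>L M (h wstar) + lam/2 * (norm wstar)^2 \<le> integral\<^sup>L M (h w') + lam/2 * (norm w')^2"
    using assms(9)[of w'] by (simp add: obj)
  have dT: "lam/2 * d^2 \<le> d * integral\<^sup>L M G"
    using Hineq min unfolding nrm by (simp add: ring_distribs)
  have d2: "d \<noteq> 0 \<Longrightarrow> lam/2 * d^2 > 0" using assms(8) by simp
  define m1 where "m1 = E 1 (\<lambda>\<omega>. X \<omega> $ i)"
  define mm where "mm = E (-1) (\<lambda>\<omega>. X \<omega> $ i)"
  define p1 where "p1 = E 1 (g 1)"
  define pm where "pm = E (-1) (g (-1))"
  have T: "integral\<^sup>L M G = mu 1 * (p1 * m1) - mu (-1) * (pm * mm)"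
    using Tform indep[of 1] indep[of "-1"] unfolding m1_def mm_def p1_def pm_def by simp
  have p: "p1 \<ge> 0" "pm \<ge> 0" using indep[of 1] indep[of "-1"] unfolding p1_def pm_def by auto
  have mu: "mu 1 \<ge> 0" "mu (-1) \<ge> 0" using mupos[of 1] mupos[of "-1"] by auto
  have c1: "d \<ge> 0" if "mm \<le> 0" "0 \<le> m1"
  proof (rule ccontr)
    assume "\<not> d \<ge> 0"
    have "0 \<le> mu 1 * (p1 * m1)" using p mu that by simp
    moreover have "mu (-1) * (pm * mm) \<le> 0" using p mu that
      by (simp add: mult_nonneg_nonpos)
    ultimately have "integral\<^sup>L M G \<ge> 0" using T by simp
    then have "d * integral\<^sup>L M G \<le> 0" using \<open>\<not> d \<ge> 0\<close> by (simp add: mult_nonpos_nonneg)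
    then show False using dT d2 \<open>\<not> d \<ge> 0\<close> by force
  qed
  have c2: "d \<le> 0" if "m1 \<le> 0" "0 \<le> mm"
  proof (rule ccontr)
    assume "\<not> d \<le> 0"
    have "mu 1 * (p1 * m1) \<le> 0" using p mu that by (simp add: mult_nonneg_nonpos)
    moreover have "0 \<le> mu (-1) * (pm * mm)" using p mu that by simp
    ultimately have "integral\<^sup>L M G \<le> 0" using T by simp
    then have "d * integral\<^sup>L M G \<le> 0" using \<open>\<not> d \<le> 0\<close> by (simp add: mult_nonneg_nonpos)
    then show False using dT d2 \<open>\<not> d \<le> 0\<close> by force
  qed
  show ?thesis using c1 c2 unfolding m1_def mm_def E_def d_def by auto
qed
end
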